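(* Let $\mathcal A$ be a finite set, $\phi:F(\mathcal A)\to F(\mathcal A)$ a homomorphism, $\mathcal R\subset F(\mathcal A)$ finite, and let $G$ be the ascending HNN extension with finite presentation $\mathcal P=\langle t,\mathcal A:\mathcal R,\ t^{-1}at=\phi(a)\ \text{for all } a\in\mathcal A\rangle$. Then the subgroup $A$ of $G$ generated by $\mathcal A$ has presentation $$A=\Big\langle \mathcal A:\ N^\infty(\mathcal R,\phi)\equiv\bigcup_{i=0}^\infty\phi^{-i}\Big(N\big(\textstyle\bigcup_{j=0}^\infty\phi^j(\mathcal R)\big)\Big)\Big\rangle.$$ Furthermore: (1) $\phi^{-i}(N(\bigcup_{j\ge0}\phi^j(\mathcal R)))\subset\phi^{-(i+1)}(N(\bigcup_{j\ge0}\phi^j(\mathcal R)))$ for all $i\ge0$; (2) $\phi(N^\infty(\mathcal R,\phi))\subset N^\infty(\mathcal R,\phi)=\phi^{-1}(N^\infty(\mathcal R,\phi))$.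
   Context: $F(\mathcal A)$ is the free group on $\mathcal A$; for $S\subset F(\mathcal A)$, $N(S)$ denotes the normal closure of $S$ in $F(\mathcal A)$, and $\phi^{-i}$ denotes full preimage under $\phi^i$. *)

theory Defs
  imports "HOL-Algebra.Algebra"
begin

text \<open>Free group on a set of generators A, realised as reduced words.
 A letter is a pair (a, b); b = False means a, b = True means a inverse.\<close>

type_synonym 'a fword = "('a \<times> bool) list"

fun red_cons :: "'a \<times> bool \<Rightarrow> 'a fword \<Rightarrow> 'a fword" where
  "red_cons x [] = [x]"
| "red_cons x (y # ys) = (if fst x = fst y \<and> snd x \<noteq> snd y then ys else x # y # ys)"

definition reduce :: "'a fword \<Rightarrow> 'a fword" where
  "reduce w = foldr red_cons w []"

fun reduced :: "'a fword \<Rightarrow> bool" where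
  "reduced [] = True"
| "reduced [x] = True"
| "reduced (x # y # ys) = (\<not> (fst x = fst y \<and> snd x \<noteq> snd y) \<and> reduced (y # ys))"

definition free_group :: "'a set \<Rightarrow> 'a fword monoid" where
  "free_group A = \<lparr> carrier = {w. reduced w \<and> fst ` set w \<subseteq> A},
                    monoid.mult = (\<lambda>u v. reduce (u @ v)),
                    monoid.one = [] \<rparr>"

definition letter :: "'a \<Rightarrow> 'a fword" where
  "letter a = [(a, False)]"

definition normal_closure :: "('g, 'm) monoid_scheme \<Rightarrow> 'g set \<Rightarrow> 'g set" where
  "normal_closure G S = \<Inter> {N. N \<lhd> G \<and> S \<subseteq> N}"

definition preim_pow :: "'a set \<Rightarrow> ('a fword \<Rightarrow> 'a fword) \<Rightarrow> nat \<Rightarrow> 'a fword set \<Rightarrow> 'a fword set" where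
  "preim_pow A \<phi> i S = {w \<in> carrier (free_group A). (\<phi> ^^ i) w \<in> S}"

definition NR :: "'a set \<Rightarrow> 'a fword set \<Rightarrow> ('a fword \<Rightarrow> 'a fword) \<Rightarrow> 'a fword set" where
  "NR A R \<phi> = normal_closure (free_group A) (\<Union>j. (\<phi> ^^ j) ` R)"

definition Ninf :: "'a set \<Rightarrow> 'a fword set \<Rightarrow> ('a fword \<Rightarrow> 'a fword) \<Rightarrow> 'a fword set" where
  "Ninf A R \<phi> = (\<Union>i. preim_pow A \<phi> i (NR A R \<phi>))"

text \<open>The HNN presentation: generators Some a (a in A) and the stable letter t = None.\<close>
definition embed :: "'a fword \<Rightarrow> 'a option fword" where
  "embed w = map (\<lambda>(a, b). (Some a, b)) w"

abbreviation FG :: "'a set \<Rightarrow> 'a option fword monoid" where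
  "FG A \<equiv> free_group (insert None (Some ` A))"

definition hnn_relators :: "'a set \<Rightarrow> 'a fword set \<Rightarrow> ('a fword \<Rightarrow> 'a fword) \<Rightarrow> 'a option fword set" where
  "hnn_relators A R \<phi> = embed ` R \<union>
     {inv\<^bsub>FG A\<^esub> (letter None) \<otimes>\<^bsub>FG A\<^esub> letter (Some a) \<otimes>\<^bsub>FG A\<^esub> letter None
        \<otimes>\<^bsub>FG A\<^esub> inv\<^bsub>FG A\<^esub> (embed (\<phi> (letter a))) | a. a \<in> A}"

definition hnn_rel_subgroup :: "'a set \<Rightarrow> 'a fword set \<Rightarrow> ('a fword \<Rightarrow> 'a fword) \<Rightarrow> 'a option fword set" where
  "hnn_rel_subgroup A R \<phi> = normal_closure (FG A) (hnn_relators A R \<phi>)"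

definition hnn_group :: "'a set \<Rightarrow> 'a fword set \<Rightarrow> ('a fword \<Rightarrow> 'a fword) \<Rightarrow> 'a option fword set monoid" where
  "hnn_group A R \<phi> = FG A Mod hnn_rel_subgroup A R \<phi>"

text \<open>The natural homomorphism F(A) \<rightarrow> G, a \<mapsto> a, whose image is the subgroup A of G.\<close>
definition hnn_incl :: "'a set \<Rightarrow> 'a fword set \<Rightarrow> ('a fword \<Rightarrow> 'a fword) \<Rightarrow> 'a fword \<Rightarrow> 'a option fword set" where
  "hnn_incl A R \<phi> w = hnn_rel_subgroup A R \<phi> #>\<^bsub>FG A\<^esub> embed w"

end

theory Submission
  imports Defs
begin



definition flip :: "'a \<times> bool \<Rightarrow> 'a \<times> bool" where "flip x = (fst x, \<not> snd x)"

lemma reduced_tl: "reduced (x # w) \<Longrightarrow> reduced w"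
  by (cases w) auto

lemma red_cons_reduced: "reduced w \<Longrightarrow> reduced (red_cons x w)"
proof (cases w)
  case (Cons y ys)
  assume r: "reduced w"
  then show ?thesis using Cons by (cases ys) (auto dest: reduced_tl)
qed simp

lemma foldr_reduced: "reduced z \<Longrightarrow> reduced (foldr red_cons u z)"
  by (induction u) (auto intro: red_cons_reduced)

lemma reduced_reduce: "reduced (reduce w)"
  unfolding reduce_def by (rule foldr_reduced) simp

lemma red_cons_set: "set (red_cons x w) \<subseteq> insert x (set w)"
  by (cases w) auto

lemma foldr_set: "set (foldr red_cons u z) \<subseteq> set u \<union> set z"
  by (induction u) (use red_cons_set in fastforce)+

lemma reduce_set: "set (reduce w) \<subseteq> set w"
  unfolding reduce_def using foldr_set[of w "[]"] by simp

lemma red_cons_noncancel: "reduced (x # w) \<Longrightarrow> red_cons x w = x # w"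
  by (cases w) auto

lemma reduce_reduced: "reduced w \<Longrightarrow> reduce w = w"
proof (induction w)
  case (Cons x w)
  then have "reduce w = w" using reduced_tl by blast
  then show ?case using Cons.prems by (simp add: reduce_def red_cons_noncancel)
qed (simp add: reduce_def)

lemma red_cons_cancel: "reduced w \<Longrightarrow> red_cons (flip x) (red_cons x w) = w"
proof (cases w)
  case Nil then show ?thesis by (simp add: flip_def)
next
  case (Cons y ys)
  assume r: "reduced w"
  show ?thesis
  proof (cases "fst x = fst y \<and> snd x \<noteq> snd y")
    case True
    then have "flip x = y" by (cases x, cases y) (auto simp: flip_def)
    then show ?thesis using True Cons r by (auto simp: red_cons_noncancel)
  next
    case False
    then show ?thesis using Cons by (auto simp: flip_def)
  qed
qed

lemma foldr_red_cons: "reduced y \<Longrightarrow> reduced z \<Longrightarrow>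
   foldr red_cons (red_cons x y) z = red_cons x (foldr red_cons y z)"
proof (cases y)
  case (Cons y1 ys)
  assume ry: "reduced y" and rz: "reduced z"
  show ?thesis
  proof (cases "fst x = fst y1 \<and> snd x \<noteq> snd y1")
    case True
    then have "x = flip y1" by (cases x, cases y1) (auto simp: flip_def)
    then show ?thesis using True Cons red_cons_cancel[OF foldr_reduced[OF rz], of y1 ys] by auto
  qed (use Cons in auto)
qed simp

lemma foldr_reduce: "reduced z \<Longrightarrow> foldr red_cons (reduce u) z = foldr red_cons u z"
proof (induction u)
  case (Cons x u)
  have "foldr red_cons (reduce (x # u)) z = foldr red_cons (red_cons x (reduce u)) z"
    by (simp add: reduce_def)
  also have "\<dots> = red_cons x (foldr red_cons (reduce u) z)"
    by (rule foldr_red_cons[OF reduced_reduce Cons.prems])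
  finally show ?case using Cons by simp
qed (simp add: reduce_def)

lemma reduce_append: "reduce (u @ v) = foldr red_cons u (reduce v)"
  by (simp add: reduce_def)

lemma reduce_assoc: "reduce (reduce (u @ v) @ w) = reduce (u @ reduce (v @ w))"
proof -
  have "reduce (reduce (u @ v) @ w) = foldr red_cons (reduce (u @ v)) (reduce w)"
    by (simp add: reduce_append)
  also have "\<dots> = foldr red_cons (u @ v) (reduce w)"
    by (simp add: foldr_reduce reduced_reduce)
  finally have "reduce (reduce (u @ v) @ w) = foldr red_cons u (foldr red_cons v (reduce w))"
    by simp
  moreover have "reduce (u @ reduce (v @ w)) = foldr red_cons u (reduce (reduce (v @ w)))"
    by (simp add: reduce_append)
  moreover have "reduce (reduce (v @ w)) = foldr red_cons v (reduce w)"
    by (simp add: reduce_reduced reduced_reduce reduce_append[symmetric])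
  ultimately show ?thesis by simp
qed

lemma foldr_inv: "reduced w \<Longrightarrow> foldr red_cons (rev (map flip w)) w = []"
proof (induction w)
  case (Cons x w)
  have rw: "reduced w" using Cons.prems reduced_tl by blast
  have "red_cons (flip x) (x # w) = w"
    using red_cons_cancel[OF rw, of x] red_cons_noncancel[OF Cons.prems] by simp
  then show ?case using Cons.IH[OF rw] by simp
qed simp

lemma free_group_group: "group (free_group A)"
proof (rule groupI)
  fix x assume x: "x \<in> carrier (free_group A)"
  let ?y = "reduce (rev (map flip x))"
  have "?y \<in> carrier (free_group A)"
    using x reduce_set[of "rev (map flip x)"] by (force simp: free_group_def reduced_reduce flip_def)
  moreover have "?y \<otimes>\<^bsub>free_group A\<^esub> x = \<one>\<^bsub>free_group A\<^esub>"
    using x by (simp add: free_group_def reduce_append foldr_reduce reduce_reduced foldr_inv)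
  ultimately show "\<exists>y \<in> carrier (free_group A). y \<otimes>\<^bsub>free_group A\<^esub> x = \<one>\<^bsub>free_group A\<^esub>" by blast
qed (auto simp: free_group_def reduced_reduce reduce_assoc reduce_reduced dest!: subsetD[OF reduce_set]; force)+




lemma fg_carrier: "w \<in> carrier (free_group A) \<longleftrightarrow> reduced w \<and> fst ` set w \<subseteq> A"
  by (simp add: free_group_def)
lemma fg_mult: "x \<otimes>\<^bsub>free_group A\<^esub> y = reduce (x @ y)"
  by (simp add: free_group_def)
lemma fg_one: "\<one>\<^bsub>free_group A\<^esub> = []"
  by (simp add: free_group_def)

lemma cons_mult:
  assumes "x # w \<in> carrier (free_group A)"
  shows "[x] \<in> carrier (free_group A)" "w \<in> carrier (free_group A)"
    "x # w = [x] \<otimes>\<^bsub>free_group A\<^esub> w"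
proof -
  show "[x] \<in> carrier (free_group A)" "w \<in> carrier (free_group A)"
    using assms by (auto simp: fg_carrier dest: reduced_tl)
  show "x # w = [x] \<otimes>\<^bsub>free_group A\<^esub> w"
    using assms by (simp add: fg_mult fg_carrier reduce_append reduce_reduced red_cons_noncancel reduced_tl)
qed

lemma letter_carrier: "a \<in> A \<Longrightarrow> letter a \<in> carrier (free_group A)"
  by (simp add: fg_carrier letter_def)

lemma letter_inv: "a \<in> A \<Longrightarrow> inv\<^bsub>free_group A\<^esub> (letter a) = [(a, True)]"
proof -
  assume a: "a \<in> A"
  interpret F: group "free_group A" by (rule free_group_group)
  have "[(a, True)] \<otimes>\<^bsub>free_group A\<^esub> letter a = \<one>\<^bsub>free_group A\<^esub>"
    by (simp add: fg_mult fg_one letter_def reduce_def)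
  moreover have "[(a, True)] \<in> carrier (free_group A)" using a by (simp add: fg_carrier)
  ultimately show ?thesis using F.inv_equality letter_carrier[OF a] by blast
qed

lemma single_carrier_cases:
  assumes "[x] \<in> carrier (free_group A)"
  obtains "fst x \<in> A" "\<not> snd x" "[x] = letter (fst x)"
    | "fst x \<in> A" "snd x" "[x] = inv\<^bsub>free_group A\<^esub> (letter (fst x))"
  using assms letter_inv[of "fst x" A] by (cases x) (auto simp: fg_carrier letter_def)

lemma hom_unique:
  assumes H: "group H" and f: "f \<in> hom (free_group A) H" and g: "g \<in> hom (free_group A) H"
    and eq: "\<And>a. a \<in> A \<Longrightarrow> f (letter a) = g (letter a)"
    and w: "w \<in> carrier (free_group A)"
  shows "f w = g w"
  using w
proof (induction w)
  case Nil
  interpret F: group "free_group A" by (rule free_group_group)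
  interpret f: group_hom "free_group A" H f using f H by (simp add: group_hom_def group_hom_axioms_def F.is_group)
  interpret g: group_hom "free_group A" H g using g H by (simp add: group_hom_def group_hom_axioms_def F.is_group)
  show ?case using f.hom_one g.hom_one by (simp add: fg_one)
next
  case (Cons x w)
  interpret F: group "free_group A" by (rule free_group_group)
  interpret f: group_hom "free_group A" H f using f H by (simp add: group_hom_def group_hom_axioms_def F.is_group)
  interpret g: group_hom "free_group A" H g using g H by (simp add: group_hom_def group_hom_axioms_def F.is_group)
  note c = cons_mult[OF Cons.prems]
  have "f [x] = g [x]"
    using c(1) apply (cases rule: single_carrier_cases)
     apply (simp add: eq)
    apply (metis eq f.hom_inv g.hom_inv letter_carrier)
    done
  then show ?case using c Cons.IH by simp
qed

definition ev :: "('b, 'm) monoid_scheme \<Rightarrow> ('a \<Rightarrow> 'b) \<Rightarrow> 'a fword \<Rightarrow> 'b" where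
  "ev H g w = foldr (\<lambda>x acc. (if snd x then inv\<^bsub>H\<^esub> (g (fst x)) else g (fst x)) \<otimes>\<^bsub>H\<^esub> acc) w \<one>\<^bsub>H\<^esub>"

lemma ev_Cons: "ev H g (x # w) = (if snd x then inv\<^bsub>H\<^esub> (g (fst x)) else g (fst x)) \<otimes>\<^bsub>H\<^esub> ev H g w"
  by (simp add: ev_def)
lemma ev_Nil: "ev H g [] = \<one>\<^bsub>H\<^esub>"
  by (simp add: ev_def)

context
  fixes H and g :: "'a \<Rightarrow> 'b" and A :: "'a set"
  assumes H: "group H" and gA: "g ` A \<subseteq> carrier H"
begin

lemma ev_closed: "fst ` set w \<subseteq> A \<Longrightarrow> ev H g w \<in> carrier H"
proof (induction w)
  case Nil then show ?case using H by (simp add: ev_Nil group.is_monoid monoid.one_closed)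
next
  case (Cons x w)
  then show ?case using H gA by (auto simp: ev_Cons intro!: monoid.m_closed group.is_monoid group.inv_closed)
qed

lemma ev_red_cons: "fst x \<in> A \<Longrightarrow> fst ` set w \<subseteq> A \<Longrightarrow> ev H g (red_cons x w) = ev H g (x # w)"
proof (cases w)
  case (Cons y ys)
  assume x: "fst x \<in> A" and w: "fst ` set w \<subseteq> A"
  interpret group H by (rule H)
  have ys: "ev H g ys \<in> carrier H" using ev_closed w Cons by auto
  have gx: "g (fst x) \<in> carrier H" using gA x by auto
  show ?thesis
  proof (cases "fst x = fst y \<and> snd x \<noteq> snd y")
    case True
    then show ?thesis using Cons ys gx
      by (cases "snd x") (auto simp: ev_Cons m_assoc[symmetric])
  qed (use Cons in auto)
qed simp

lemma ev_reduce: "fst ` set w \<subseteq> A \<Longrightarrow> ev H g (reduce w) = ev H g w"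
proof (induction w)
  case (Cons x w)
  have "reduce (x # w) = red_cons x (reduce w)" by (simp add: reduce_def)
  moreover have "fst ` set (reduce w) \<subseteq> A" using Cons.prems reduce_set by fastforce
  ultimately have "ev H g (reduce (x # w)) = ev H g (x # reduce w)"
    using ev_red_cons Cons.prems by simp
  then show ?case using Cons by (simp add: ev_Cons)
qed (simp add: reduce_def)

lemma ev_append: "fst ` set u \<subseteq> A \<Longrightarrow> fst ` set v \<subseteq> A \<Longrightarrow> ev H g (u @ v) = ev H g u \<otimes>\<^bsub>H\<^esub> ev H g v"
proof (induction u)
  case Nil then show ?case using ev_closed H by (simp add: ev_Nil group.is_monoid monoid.l_one)
next
  case (Cons x u)
  interpret group H by (rule H)
  have "g (fst x) \<in> carrier H" using gA Cons.prems by auto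
  then show ?case using Cons ev_closed by (simp add: ev_Cons m_assoc)
qed

lemma ev_hom: "ev H g \<in> hom (free_group A) H"
proof (rule homI)
  fix x y assume "x \<in> carrier (free_group A)" "y \<in> carrier (free_group A)"
  then show "ev H g (x \<otimes>\<^bsub>free_group A\<^esub> y) = ev H g x \<otimes>\<^bsub>H\<^esub> ev H g y"
  proof -
    assume "x \<in> carrier (free_group A)" "y \<in> carrier (free_group A)"
    then have "fst ` set x \<subseteq> A" "fst ` set y \<subseteq> A" by (auto simp: fg_carrier)
    moreover from this have "fst ` set (x @ y) \<subseteq> A" by auto
    ultimately show ?thesis by (simp add: fg_mult ev_reduce ev_append)
  qed
qed (simp add: fg_carrier ev_closed)

lemma ev_letter: "a \<in> A \<Longrightarrow> ev H g (letter a) = g a"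
  using H gA by (auto simp: letter_def ev_Cons ev_Nil group.is_monoid monoid.r_one)

end

definition embl :: "'a \<times> bool \<Rightarrow> 'a option \<times> bool" where "embl = (\<lambda>(a, b). (Some a, b))"

lemma embed_embl: "embed w = map embl w"
  by (simp add: embed_def embl_def)

lemma map_red_cons: "red_cons (embl x) (map embl w) = map embl (red_cons x w)"
  by (cases w) (auto simp: embl_def split: prod.splits)

lemma map_reduce: "reduce (map embl w) = map embl (reduce w)"
  by (induction w) (auto simp: reduce_def map_red_cons)

lemma map_reduced: "reduced (map embl w) = reduced w"
  by (induction w rule: reduced.induct) (auto simp: embl_def split: prod.splits)

lemma embed_hom: "embed \<in> hom (free_group A) (FG A)"
proof (rule homI)
  fix x assume "x \<in> carrier (free_group A)"
  then show "embed x \<in> carrier (FG A)"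
    unfolding fg_carrier embed_embl map_reduced by (auto simp: embl_def split: prod.splits)
next
  fix x y assume "x \<in> carrier (free_group A)" "y \<in> carrier (free_group A)"
  then show "embed (x \<otimes>\<^bsub>free_group A\<^esub> y) = embed x \<otimes>\<^bsub>FG A\<^esub> embed y"
    by (simp add: fg_mult embed_embl map_reduce[symmetric])
qed

lemma embed_letter: "embed (letter a) = letter (Some a)"
  by (simp add: embed_def letter_def)




lemma preimage_normal:
  assumes G: "group G" and H: "group H" and f: "f \<in> hom G H" and N: "N \<lhd> H"
  shows "{x \<in> carrier G. f x \<in> N} \<lhd> G"
proof -
  interpret G: group G by (rule G)
  interpret H: group H by (rule H)
  interpret f: group_hom G H f by (simp add: group_hom_def group_hom_axioms_def G.is_group H.is_group f)
  interpret N: normal N H by (rule N)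
  show ?thesis
  proof (intro G.normal_inv_iff[THEN iffD2] conjI ballI)
    show "subgroup {x \<in> carrier G. f x \<in> N} G"
      by (rule G.subgroupI) (auto simp: f.hom_inv f.hom_mult intro!: exI[of _ "\<one>\<^bsub>G\<^esub>"])
  next
    fix x h assume "x \<in> carrier G" "h \<in> {x \<in> carrier G. f x \<in> N}"
    then show "x \<otimes>\<^bsub>G\<^esub> h \<otimes>\<^bsub>G\<^esub> inv\<^bsub>G\<^esub> x \<in> {x \<in> carrier G. f x \<in> N}"
      by (auto simp: f.hom_inv f.hom_mult N.inv_op_closed2)
  qed
qed

lemma normal_closure_normal:
  assumes G: "group G" and S: "S \<subseteq> carrier G"
  shows "normal_closure G S \<lhd> G" "S \<subseteq> normal_closure G S"
proof -
  interpret G: group G by (rule G)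
  have "carrier G \<lhd> G" by (auto simp: G.normal_inv_iff G.subgroup_self)
  then have ne: "{N. N \<lhd> G \<and> S \<subseteq> N} \<noteq> {}"
    using S by blast
  show "normal_closure G S \<lhd> G"
    unfolding normal_closure_def
  proof (intro G.normal_inv_iff[THEN iffD2] conjI ballI)
    show "subgroup (\<Inter> {N. N \<lhd> G \<and> S \<subseteq> N}) G"
      using ne by (intro G.subgroups_Inter) (auto dest: normal_imp_subgroup)
  next
    fix x h assume "x \<in> carrier G" "h \<in> \<Inter> {N. N \<lhd> G \<and> S \<subseteq> N}"
    then show "x \<otimes>\<^bsub>G\<^esub> h \<otimes>\<^bsub>G\<^esub> inv\<^bsub>G\<^esub> x \<in> \<Inter> {N. N \<lhd> G \<and> S \<subseteq> N}"
      by (auto intro: normal.inv_op_closed2)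
  qed
  show "S \<subseteq> normal_closure G S" by (auto simp: normal_closure_def)
qed

lemma normal_closure_min: "N \<lhd> G \<Longrightarrow> S \<subseteq> N \<Longrightarrow> normal_closure G S \<subseteq> N"
  by (auto simp: normal_closure_def)

lemma normal_closure_id: "group G \<Longrightarrow> N \<lhd> G \<Longrightarrow> normal_closure G N = N"
  using normal_closure_min[of N G N] normal_closure_normal[of G N]
  by (simp add: normal_imp_subgroup subgroup.subset subset_antisym)

locale HNN =
  fixes A :: "'a set" and R :: "'a fword set" and \<phi> :: "'a fword \<Rightarrow> 'a fword"
  assumes phi: "\<phi> \<in> hom (free_group A) (free_group A)"
    and Rc: "R \<subseteq> carrier (free_group A)"
begin

abbreviation "F \<equiv> free_group A"

lemma F_group: "group F" by (rule free_group_group)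

lemma phi_pow_hom: "\<phi> ^^ i \<in> hom F F"
proof (induction i)
  case 0
  then show ?case by (auto simp: hom_def)
next
  case (Suc i)
  have "\<phi> ^^ Suc i = \<phi> \<circ> \<phi> ^^ i" by simp
  then show ?case using hom_compose[OF Suc phi] by metis
qed

lemma phi_pow_carrier: "x \<in> carrier F \<Longrightarrow> (\<phi> ^^ i) x \<in> carrier F"
  using phi_pow_hom[of i] by (auto simp: hom_def)

lemma gens_carrier: "(\<Union>j. (\<phi> ^^ j) ` R) \<subseteq> carrier F"
  using Rc phi_pow_carrier by auto

lemma NR_normal: "NR A R \<phi> \<lhd> F"
  unfolding NR_def by (rule normal_closure_normal(1)[OF F_group gens_carrier])

lemma gens_NR: "(\<phi> ^^ j) r \<in> NR A R \<phi>" if "r \<in> R"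
  using normal_closure_normal(2)[OF F_group gens_carrier] that unfolding NR_def by blast

lemma phi_NR: "x \<in> NR A R \<phi> \<Longrightarrow> \<phi> x \<in> NR A R \<phi>"
proof -
  have "NR A R \<phi> \<subseteq> {x \<in> carrier F. \<phi> x \<in> NR A R \<phi>}"
    unfolding NR_def
  proof (rule normal_closure_min)
    show "{x \<in> carrier F. \<phi> x \<in> normal_closure F (\<Union>j. (\<phi> ^^ j) ` R)} \<lhd> F"
      using preimage_normal[OF F_group F_group phi NR_normal] by (simp add: NR_def)
    have "\<phi> ((\<phi> ^^ j) r) \<in> NR A R \<phi>" if "r \<in> R" for j r
      using gens_NR[OF that, of "Suc j"] by simp
    then show "(\<Union>j. (\<phi> ^^ j) ` R) \<subseteq> {x \<in> carrier F. \<phi> x \<in> normal_closure F (\<Union>j. (\<phi> ^^ j) ` R)}"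
      using gens_carrier unfolding NR_def by blast
  qed
  then show "x \<in> NR A R \<phi> \<Longrightarrow> \<phi> x \<in> NR A R \<phi>" by blast
qed

abbreviation "P i \<equiv> preim_pow A \<phi> i (NR A R \<phi>)"

lemma P_normal: "P i \<lhd> F"
  unfolding preim_pow_def by (rule preimage_normal[OF F_group F_group phi_pow_hom NR_normal])

lemma P_Suc: "P i \<subseteq> P (Suc i)"
  using phi_NR by (auto simp: preim_pow_def)

lemma P_mono: "i \<le> j \<Longrightarrow> P i \<subseteq> P j"
  by (induction j rule: dec_induct) (use P_Suc in auto)

lemma K_normal: "Ninf A R \<phi> \<lhd> F"
proof -
  interpret G: group F by (rule F_group)
  show ?thesis
  proof (intro G.normal_inv_iff[THEN iffD2] conjI ballI)
    show "subgroup (Ninf A R \<phi>) F"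
    proof (rule G.subgroupI)
      show "Ninf A R \<phi> \<subseteq> carrier F" by (auto simp: Ninf_def preim_pow_def)
      show "Ninf A R \<phi> \<noteq> {}"
        using subgroup.one_closed[OF normal_imp_subgroup[OF P_normal[of 0]]] by (auto simp: Ninf_def)
      fix a assume "a \<in> Ninf A R \<phi>"
      then obtain i where "a \<in> P i" by (auto simp: Ninf_def)
      then show "inv\<^bsub>F\<^esub> a \<in> Ninf A R \<phi>"
        using subgroup.m_inv_closed[OF normal_imp_subgroup[OF P_normal[of i]]] by (auto simp: Ninf_def)
    next
      fix a b assume "a \<in> Ninf A R \<phi>" "b \<in> Ninf A R \<phi>"
      then obtain i j where "a \<in> P i" "b \<in> P j" by (auto simp: Ninf_def)
      then have "a \<in> P (max i j)" "b \<in> P (max i j)" using P_mono[of i "max i j"] P_mono[of j "max i j"] by auto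
      then show "a \<otimes>\<^bsub>F\<^esub> b \<in> Ninf A R \<phi>"
        using subgroup.m_closed[OF normal_imp_subgroup[OF P_normal[of "max i j"]]] by (auto simp: Ninf_def)
    qed
  next
    fix x h assume "x \<in> carrier F" "h \<in> Ninf A R \<phi>"
    then obtain i where "h \<in> P i" by (auto simp: Ninf_def)
    then show "x \<otimes>\<^bsub>F\<^esub> h \<otimes>\<^bsub>F\<^esub> inv\<^bsub>F\<^esub> x \<in> Ninf A R \<phi>"
      using normal.inv_op_closed2[OF P_normal[of i]] \<open>x \<in> carrier F\<close> by (auto simp: Ninf_def)
  qed
qed

lemma phi_K: "x \<in> Ninf A R \<phi> \<Longrightarrow> \<phi> x \<in> Ninf A R \<phi>"
proof -
  assume "x \<in> Ninf A R \<phi>"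
  then obtain i where x: "x \<in> P i" by (auto simp: Ninf_def)
  then have "(\<phi> ^^ i) (\<phi> x) = \<phi> ((\<phi> ^^ i) x)" by (simp add: funpow_swap1)
  then have "\<phi> x \<in> P i" using x phi_NR phi by (auto simp: preim_pow_def hom_def)
  then show ?thesis by (auto simp: Ninf_def)
qed

lemma K_pre: "(\<phi> ^^ m) x \<in> Ninf A R \<phi> \<Longrightarrow> x \<in> carrier F \<Longrightarrow> x \<in> Ninf A R \<phi>"
proof -
  assume a: "(\<phi> ^^ m) x \<in> Ninf A R \<phi>" and x: "x \<in> carrier F"
  then obtain i where "(\<phi> ^^ m) x \<in> P i" by (auto simp: Ninf_def)
  then have "x \<in> P (i + m)" using x by (auto simp: preim_pow_def funpow_add)
  then show ?thesis by (auto simp: Ninf_def)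
qed

lemma K_eq: "Ninf A R \<phi> = preim_pow A \<phi> 1 (Ninf A R \<phi>)"
proof
  show "Ninf A R \<phi> \<subseteq> preim_pow A \<phi> 1 (Ninf A R \<phi>)"
    using phi_K by (auto simp: preim_pow_def Ninf_def)
  show "preim_pow A \<phi> 1 (Ninf A R \<phi>) \<subseteq> Ninf A R \<phi>"
    using K_pre[of 1] by (auto simp: preim_pow_def)
qed

end



declare mult_FactGroup[simp del] one_FactGroup[simp del]

lemma (in group) cancel_aux: "a \<in> carrier G \<Longrightarrow> z \<in> carrier G \<Longrightarrow> a \<otimes> (inv a \<otimes> z) = z"
  by (simp add: m_assoc[symmetric])

lemma (in group) conj_mult: "a \<in> carrier G \<Longrightarrow> x \<in> carrier G \<Longrightarrow> y \<in> carrier G \<Longrightarrow>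
   inv a \<otimes> (x \<otimes> y) \<otimes> a = (inv a \<otimes> x \<otimes> a) \<otimes> (inv a \<otimes> y \<otimes> a)"
  by (simp add: m_assoc cancel_aux)

lemma (in group) conj_one: "a \<in> carrier G \<Longrightarrow> x \<in> carrier G \<Longrightarrow> inv a \<otimes> x \<otimes> a = \<one> \<Longrightarrow> x = \<one>"
  by (metis inv_closed l_inv m_assoc m_closed r_one l_cancel r_inv r_cancel one_closed)

context HNN begin

abbreviation "G \<equiv> FG A"
abbreviation "Hs \<equiv> hnn_rel_subgroup A R \<phi>"
abbreviation "Q \<equiv> G Mod Hs"

lemma G_group: "group G" by (rule free_group_group)

lemma embed_carrier: "w \<in> carrier F \<Longrightarrow> embed w \<in> carrier G"
  using embed_hom by (auto simp: hom_def)

lemma tG: "letter None \<in> carrier G" by (simp add: letter_def fg_carrier)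
lemma aG: "a \<in> A \<Longrightarrow> letter (Some a) \<in> carrier G" by (simp add: letter_def fg_carrier)

lemma relators_carrier: "hnn_relators A R \<phi> \<subseteq> carrier G"
proof -
  interpret G: group G by (rule G_group)
  have "embed (\<phi> (letter a)) \<in> carrier G" if "a \<in> A" for a
    using embed_carrier phi letter_carrier[OF that] by (auto simp: hom_def)
  then show ?thesis using Rc embed_carrier tG aG unfolding hnn_relators_def by auto
qed

lemma Hs_normal: "Hs \<lhd> G"
  unfolding hnn_rel_subgroup_def by (rule normal_closure_normal(1)[OF G_group relators_carrier])

lemma relators_Hs: "hnn_relators A R \<phi> \<subseteq> Hs"
  unfolding hnn_rel_subgroup_def by (rule normal_closure_normal(2)[OF G_group relators_carrier])

lemma Q_group: "group Q" using normal.factorgroup_is_group[OF Hs_normal] .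

definition E :: "'a fword \<Rightarrow> 'a option fword set" where "E w = Hs #>\<^bsub>G\<^esub> embed w"

lemma E_hom: "E \<in> hom F Q"
proof -
  have "(\<lambda>x. Hs #>\<^bsub>G\<^esub> x) \<circ> embed \<in> hom F Q"
    by (rule hom_compose[OF embed_hom normal.r_coset_hom_Mod[OF Hs_normal]])
  moreover have "E = (\<lambda>x. Hs #>\<^bsub>G\<^esub> x) \<circ> embed" by (simp add: fun_eq_iff E_def)
  ultimately show ?thesis by simp
qed

definition "\<tau> = Hs #>\<^bsub>G\<^esub> letter None"

lemma tau_Q: "\<tau> \<in> carrier Q"
  using normal.r_coset_hom_Mod[OF Hs_normal] tG by (auto simp: \<tau>_def hom_def)

lemma E_Q: "w \<in> carrier F \<Longrightarrow> E w \<in> carrier Q"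
  using E_hom by (auto simp: hom_def)

lemma E_rel: "a \<in> A \<Longrightarrow> E (\<phi> (letter a)) = inv\<^bsub>Q\<^esub> \<tau> \<otimes>\<^bsub>Q\<^esub> E (letter a) \<otimes>\<^bsub>Q\<^esub> \<tau>"
proof -
  assume a: "a \<in> A"
  interpret G: group G by (rule G_group)
  interpret Q: group Q by (rule Q_group)
  interpret \<pi>: group_hom G Q "\<lambda>x. Hs #>\<^bsub>G\<^esub> x"
    using normal.r_coset_hom_Mod[OF Hs_normal] by (simp add: group_hom_def group_hom_axioms_def G.is_group Q.is_group)
  have pa: "\<phi> (letter a) \<in> carrier F" using phi letter_carrier[OF a] by (auto simp: hom_def)
  let ?r = "inv\<^bsub>G\<^esub> (letter None) \<otimes>\<^bsub>G\<^esub> letter (Some a) \<otimes>\<^bsub>G\<^esub> letter None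
        \<otimes>\<^bsub>G\<^esub> inv\<^bsub>G\<^esub> (embed (\<phi> (letter a)))"
  have "?r \<in> Hs" using relators_Hs a unfolding hnn_relators_def by blast
  moreover have rG: "?r \<in> carrier G" using tG aG[OF a] embed_carrier[OF pa] by simp
  ultimately have "Hs #>\<^bsub>G\<^esub> ?r = \<one>\<^bsub>Q\<^esub>"
    using G.coset_join2 normal_imp_subgroup[OF Hs_normal] by (simp add: one_FactGroup)
  then have "inv\<^bsub>Q\<^esub> \<tau> \<otimes>\<^bsub>Q\<^esub> E (letter a) \<otimes>\<^bsub>Q\<^esub> \<tau> \<otimes>\<^bsub>Q\<^esub> inv\<^bsub>Q\<^esub> E (\<phi> (letter a)) = \<one>\<^bsub>Q\<^esub>"
    using tG aG[OF a] embed_carrier[OF pa]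
    by (simp add: \<pi>.hom_mult \<pi>.hom_inv \<tau>_def E_def embed_letter)
  then show ?thesis
    using tau_Q E_Q[OF pa] E_Q[OF letter_carrier[OF a]]
    by (metis Q.inv_closed Q.inv_equality Q.inv_inv Q.m_closed Q.inv_mult_group)
qed

lemma E_phi: "w \<in> carrier F \<Longrightarrow> E (\<phi> w) = inv\<^bsub>Q\<^esub> \<tau> \<otimes>\<^bsub>Q\<^esub> E w \<otimes>\<^bsub>Q\<^esub> \<tau>"
proof -
  assume w: "w \<in> carrier F"
  interpret Q: group Q by (rule Q_group)
  have h1: "E \<circ> \<phi> \<in> hom F Q" by (rule hom_compose[OF phi E_hom])
  have h2: "(\<lambda>w. inv\<^bsub>Q\<^esub> \<tau> \<otimes>\<^bsub>Q\<^esub> E w \<otimes>\<^bsub>Q\<^esub> \<tau>) \<in> hom F Q"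
  proof (rule homI)
    fix x y assume "x \<in> carrier F" "y \<in> carrier F"
    then show "inv\<^bsub>Q\<^esub> \<tau> \<otimes>\<^bsub>Q\<^esub> E (x \<otimes>\<^bsub>F\<^esub> y) \<otimes>\<^bsub>Q\<^esub> \<tau> =
        (inv\<^bsub>Q\<^esub> \<tau> \<otimes>\<^bsub>Q\<^esub> E x \<otimes>\<^bsub>Q\<^esub> \<tau>) \<otimes>\<^bsub>Q\<^esub> (inv\<^bsub>Q\<^esub> \<tau> \<otimes>\<^bsub>Q\<^esub> E y \<otimes>\<^bsub>Q\<^esub> \<tau>)"
      using E_hom E_Q tau_Q by (simp add: hom_mult Q.conj_mult)
  qed (use E_Q tau_Q in auto)
  show ?thesis
    using hom_unique[OF Q_group h1 h2 _ w] E_rel by simp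
qed

lemma E_phi_pow: "w \<in> carrier F \<Longrightarrow> E ((\<phi> ^^ i) w) = \<one>\<^bsub>Q\<^esub> \<Longrightarrow> E w = \<one>\<^bsub>Q\<^esub>"
proof (induction i arbitrary: w)
  case (Suc i)
  interpret Q: group Q by (rule Q_group)
  have pw: "\<phi> w \<in> carrier F" using Suc.prems phi by (auto simp: hom_def)
  have "E ((\<phi> ^^ i) (\<phi> w)) = \<one>\<^bsub>Q\<^esub>" using Suc.prems by (simp add: funpow_swap1)
  then have "E (\<phi> w) = \<one>\<^bsub>Q\<^esub>" using Suc.IH pw by blast
  then have "inv\<^bsub>Q\<^esub> \<tau> \<otimes>\<^bsub>Q\<^esub> E w \<otimes>\<^bsub>Q\<^esub> \<tau> = \<one>\<^bsub>Q\<^esub>" using E_phi Suc.prems by simp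
  then show ?case using tau_Q E_Q[OF Suc.prems(1)] Q.conj_one by blast
qed simp

lemma E_gens: "r \<in> R \<Longrightarrow> E ((\<phi> ^^ j) r) = \<one>\<^bsub>Q\<^esub>"
proof (induction j)
  case 0
  interpret G: group G by (rule G_group)
  have "embed r \<in> Hs" using relators_Hs 0 unfolding hnn_relators_def by blast
  then show ?case using G.coset_join2 normal_imp_subgroup[OF Hs_normal] embed_carrier Rc 0
    by (auto simp: E_def one_FactGroup)
next
  case (Suc j)
  interpret Q: group Q by (rule Q_group)
  have "(\<phi> ^^ j) r \<in> carrier F" using phi_pow_carrier Rc Suc.prems by auto
  then show ?case using E_phi Suc tau_Q by simp
qed

lemma NR_ker: "NR A R \<phi> \<subseteq> {w \<in> carrier F. E w = \<one>\<^bsub>Q\<^esub>}"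
  unfolding NR_def
proof (rule normal_closure_min)
  show "{w \<in> carrier F. E w = \<one>\<^bsub>Q\<^esub>} \<lhd> F"
    using preimage_normal[OF F_group Q_group E_hom, of "{\<one>\<^bsub>Q\<^esub>}"]
      group.normal_inv_iff[OF Q_group] group.triv_subgroup[OF Q_group]
    by (simp add: group.is_monoid[OF Q_group] group.r_inv[OF Q_group] monoid.r_one monoid.m_closed group.inv_closed)
  show "(\<Union>j. (\<phi> ^^ j) ` R) \<subseteq> {w \<in> carrier F. E w = \<one>\<^bsub>Q\<^esub>}"
    using E_gens gens_carrier by blast
qed

lemma K_ker: "Ninf A R \<phi> \<subseteq> kernel F (hnn_group A R \<phi>) (hnn_incl A R \<phi>)"
proof
  fix w assume "w \<in> Ninf A R \<phi>"
  then obtain i where w: "w \<in> carrier F" "(\<phi> ^^ i) w \<in> NR A R \<phi>" by (auto simp: Ninf_def preim_pow_def)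
  then have "E ((\<phi> ^^ i) w) = \<one>\<^bsub>Q\<^esub>" using NR_ker by blast
  then have "E w = \<one>\<^bsub>Q\<^esub>" using E_phi_pow w by blast
  then show "w \<in> kernel F (hnn_group A R \<phi>) (hnn_incl A R \<phi>)"
    using w by (simp add: kernel_def hnn_group_def hnn_incl_def E_def one_FactGroup)
qed

end



definition resp :: "('x \<times> 'x) set \<Rightarrow> ('x \<Rightarrow> 'x) \<Rightarrow> bool" where
  "resp r f \<longleftrightarrow> (\<forall>x y. (x, y) \<in> r \<longrightarrow> (f x, f y) \<in> r)"

definition liftX :: "'x set \<Rightarrow> ('x \<times> 'x) set \<Rightarrow> ('x \<Rightarrow> 'x) \<Rightarrow> 'x set \<Rightarrow> 'x set" where
  "liftX D r f = (\<lambda>S \<in> D // r. r `` {f (SOME x. x \<in> S)})"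

context
  fixes D :: "'x set" and r
  assumes eqv: "equiv D r"
begin

lemma resp_D: "resp r f \<Longrightarrow> x \<in> D \<Longrightarrow> f x \<in> D"
  using eqv unfolding resp_def equiv_def refl_on_def by blast

lemma lift_cls: "resp r f \<Longrightarrow> x \<in> D \<Longrightarrow> liftX D r f (r `` {x}) = r `` {f x}"
proof -
  assume f: "resp r f" and x: "x \<in> D"
  have ex: "x \<in> r `` {x}" using equiv_class_self[OF eqv x] .
  then have s: "(SOME y. y \<in> r `` {x}) \<in> r `` {x}" by (rule someI)
  then have "(x, SOME y. y \<in> r `` {x}) \<in> r" by simp
  then have fr: "(f x, f (SOME y. y \<in> r `` {x})) \<in> r" using f by (auto simp: resp_def)
  then have "r `` {f (SOME y. y \<in> r `` {x})} = r `` {f x}"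
    using equiv_class_eq[OF eqv] by blast
  then show ?thesis using x by (simp add: liftX_def quotientI)
qed

lemma lift_mem: "resp r f \<Longrightarrow> S \<in> D // r \<Longrightarrow> liftX D r f S \<in> D // r"
proof -
  assume f: "resp r f" and S: "S \<in> D // r"
  then obtain x where x: "S = r `` {x}" "x \<in> D" by (auto elim!: quotientE)
  then show ?thesis using f by (simp add: lift_cls quotientI resp_D)
qed

lemma resp_comp: "resp r f \<Longrightarrow> resp r g \<Longrightarrow> resp r (f \<circ> g)"
  by (auto simp: resp_def)

lemma resp_id: "resp r id"
  by (auto simp: resp_def)

lemma lift_comp: "resp r f \<Longrightarrow> resp r g \<Longrightarrow> compose (D // r) (liftX D r f) (liftX D r g) = liftX D r (f \<circ> g)"
proof (rule ext)
  fix S assume f: "resp r f" and g: "resp r g"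
  show "compose (D // r) (liftX D r f) (liftX D r g) S = liftX D r (f \<circ> g) S"
  proof (cases "S \<in> D // r")
    case True
    then obtain x where x: "S = r `` {x}" "x \<in> D" by (auto elim!: quotientE)
    have "liftX D r f (liftX D r g S) = r `` {f (g x)}"
      using x f g by (simp add: lift_cls resp_D)
    moreover have "liftX D r (f \<circ> g) S = r `` {f (g x)}"
      using x f g by (simp add: lift_cls resp_comp)
    ultimately show ?thesis using True by (simp add: compose_def)
  qed (simp add: liftX_def compose_def)
qed

lemma lift_cong: "resp r f \<Longrightarrow> resp r g \<Longrightarrow> (\<And>x. x \<in> D \<Longrightarrow> (f x, g x) \<in> r) \<Longrightarrow> liftX D r f = liftX D r g"
proof (rule ext)
  fix S assume f: "resp r f" and g: "resp r g" and fg: "\<And>x. x \<in> D \<Longrightarrow> (f x, g x) \<in> r"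
  show "liftX D r f S = liftX D r g S"
  proof (cases "S \<in> D // r")
    case True
    then obtain x where "S = r `` {x}" "x \<in> D" by (auto elim!: quotientE)
    then show ?thesis using f g fg[OF \<open>x \<in> D\<close>] lift_cls by (simp add: equiv_class_eq[OF eqv])
  qed (simp add: liftX_def)
qed

lemma lift_id: "liftX D r id = (\<lambda>S \<in> D // r. S)"
proof (rule ext)
  fix S show "liftX D r id S = (\<lambda>S \<in> D // r. S) S"
  proof (cases "S \<in> D // r")
    case True
    then obtain x where "S = r `` {x}" "x \<in> D" by (auto elim!: quotientE)
    then show ?thesis using lift_cls[OF resp_id] True by simp
  qed (simp add: liftX_def)
qed

lemma lift_Bij: "resp r f \<Longrightarrow> resp r g \<Longrightarrow> (\<And>x. x \<in> D \<Longrightarrow> (f (g x), x) \<in> r) \<Longrightarrow> (\<And>x. x \<in> D \<Longrightarrow> (g (f x), x) \<in> r)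
   \<Longrightarrow> liftX D r f \<in> Bij (D // r)"
proof -
  assume f: "resp r f" and g: "resp r g" and fg: "\<And>x. x \<in> D \<Longrightarrow> (f (g x), x) \<in> r"
    and gf: "\<And>x. x \<in> D \<Longrightarrow> (g (f x), x) \<in> r"
  have "bij_betw (liftX D r f) (D // r) (D // r)"
  proof (rule bij_betw_byWitness[where f' = "liftX D r g"])
    show "\<forall>a\<in>D // r. liftX D r g (liftX D r f a) = a"
    proof
      fix S assume "S \<in> D // r"
      then obtain x where x: "S = r `` {x}" "x \<in> D" by (auto elim!: quotientE)
      then show "liftX D r g (liftX D r f S) = S"
        using gf[OF x(2)] f g by (simp add: lift_cls resp_D equiv_class_eq[OF eqv])
    qed
    show "\<forall>a\<in>D // r. liftX D r f (liftX D r g a) = a"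
    proof
      fix S assume "S \<in> D // r"
      then obtain x where x: "S = r `` {x}" "x \<in> D" by (auto elim!: quotientE)
      then show "liftX D r f (liftX D r g S) = S"
        using fg[OF x(2)] f g by (simp add: lift_cls resp_D equiv_class_eq[OF eqv])
    qed
    show "liftX D r f ` (D // r) \<subseteq> D // r" using lift_mem f by blast
    show "liftX D r g ` (D // r) \<subseteq> D // r" using lift_mem g by blast
  qed
  then show ?thesis by (simp add: Bij_def liftX_def)
qed

end



context HNN begin

abbreviation "K \<equiv> Ninf A R \<phi>"

definition C :: "'a fword \<Rightarrow> 'a fword set" where "C x = K #>\<^bsub>F\<^esub> x"

lemma phm_group_hom: "group_hom F F (\<phi> ^^ m)"
  by (simp add: group_hom_def group_hom_axioms_def F_group phi_pow_hom)

lemma phm_mult: "x \<in> carrier F \<Longrightarrow> y \<in> carrier F \<Longrightarrow> (\<phi> ^^ m) (x \<otimes>\<^bsub>F\<^esub> y) = (\<phi> ^^ m) x \<otimes>\<^bsub>F\<^esub> (\<phi> ^^ m) y"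
  using group_hom.hom_mult[OF phm_group_hom] by blast

lemma phm_inv: "x \<in> carrier F \<Longrightarrow> (\<phi> ^^ m) (inv\<^bsub>F\<^esub> x) = inv\<^bsub>F\<^esub> (\<phi> ^^ m) x"
  using group_hom.hom_inv[OF phm_group_hom] by blast

lemma phm_one: "(\<phi> ^^ m) [] = []"
  using group_hom.hom_one[OF phm_group_hom] by (simp add: fg_one)

lemma phcomm: "(\<phi> ^^ a) ((\<phi> ^^ b) x) = (\<phi> ^^ b) ((\<phi> ^^ a) x)"
  by (metis funpow_add add.commute comp_apply)

lemma phadd: "(\<phi> ^^ a) ((\<phi> ^^ b) x) = (\<phi> ^^ (a + b)) x"
  by (simp add: funpow_add)

lemma K_sub: "K \<subseteq> carrier F"
  using K_normal normal_imp_subgroup subgroup.subset by blast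

lemma phm_K: "x \<in> K \<Longrightarrow> (\<phi> ^^ m) x \<in> K"
  by (induction m) (auto intro: phi_K)

lemma C_eq_iff: "x \<in> carrier F \<Longrightarrow> y \<in> carrier F \<Longrightarrow> C x = C y \<longleftrightarrow> x \<otimes>\<^bsub>F\<^esub> inv\<^bsub>F\<^esub> y \<in> K"
proof -
  assume x: "x \<in> carrier F" and y: "y \<in> carrier F"
  interpret Fg: group F by (rule F_group)
  have sg: "subgroup K F" using K_normal normal_imp_subgroup by blast
  show ?thesis
  proof
    assume "C x = C y"
    then have "x \<in> K #>\<^bsub>F\<^esub> y" using Fg.rcos_self[OF x sg] by (simp add: C_def)
    then show "x \<otimes>\<^bsub>F\<^esub> inv\<^bsub>F\<^esub> y \<in> K" using subgroup.rcos_module_imp[OF sg F_group y] by blast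
  next
    assume "x \<otimes>\<^bsub>F\<^esub> inv\<^bsub>F\<^esub> y \<in> K"
    then have "x \<in> K #>\<^bsub>F\<^esub> y" using subgroup.rcos_module_rev[OF sg F_group y x] by blast
    then show "C x = C y" using Fg.repr_independence[OF _ y sg] by (simp add: C_def)
  qed
qed

lemma C_mult: "x \<in> carrier F \<Longrightarrow> y \<in> carrier F \<Longrightarrow> C (x \<otimes>\<^bsub>F\<^esub> y) = C x <#>\<^bsub>F\<^esub> C y"
  using normal.rcos_sum[OF K_normal] by (simp add: C_def)

lemma C_K: "k \<in> K \<Longrightarrow> y \<in> carrier F \<Longrightarrow> C (k \<otimes>\<^bsub>F\<^esub> y) = C y"
proof -
  assume k: "k \<in> K" and y: "y \<in> carrier F"
  interpret Fg: group F by (rule F_group)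
  have kc: "k \<in> carrier F" using k K_sub by blast
  have "(k \<otimes>\<^bsub>F\<^esub> y) \<otimes>\<^bsub>F\<^esub> inv\<^bsub>F\<^esub> y = k" using kc y by (simp add: Fg.m_assoc)
  then show ?thesis using C_eq_iff[of "k \<otimes>\<^bsub>F\<^esub> y" y] k kc y by simp
qed

lemma C_one: "x \<in> carrier F \<Longrightarrow> C x = C [] \<Longrightarrow> x \<in> K"
proof -
  assume x: "x \<in> carrier F" "C x = C []"
  interpret Fg: group F by (rule F_group)
  have "[] = \<one>\<^bsub>F\<^esub>" by (simp add: fg_one)
  then show ?thesis using x C_eq_iff[of x "[]"] by (metis Fg.inv_one Fg.one_closed Fg.r_one)
qed

lemma Cphi: "x \<in> carrier F \<Longrightarrow> y \<in> carrier F \<Longrightarrow> C x = C y \<Longrightarrow> C ((\<phi> ^^ m) x) = C ((\<phi> ^^ m) y)"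
  by (simp add: C_eq_iff phi_pow_carrier phm_inv[symmetric] phm_mult[symmetric] phm_K group.inv_closed[OF F_group])

lemma Cinj: "x \<in> carrier F \<Longrightarrow> y \<in> carrier F \<Longrightarrow> C ((\<phi> ^^ m) x) = C ((\<phi> ^^ m) y) \<Longrightarrow> C x = C y"
  using K_pre[of m] by (simp add: C_eq_iff phi_pow_carrier phm_inv[symmetric] phm_mult[symmetric] group.inv_closed[OF F_group] monoid.m_closed[OF group.is_monoid[OF F_group]])

definition rel :: "(('a fword \<times> nat) \<times> ('a fword \<times> nat)) set" where
  "rel = {((w, n), (v, m)). w \<in> carrier F \<and> v \<in> carrier F \<and> C ((\<phi> ^^ m) w) = C ((\<phi> ^^ n) v)}"

abbreviation "D \<equiv> carrier F \<times> (UNIV :: nat set)"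

lemma rel_iff: "((w, n), (v, m)) \<in> rel \<longleftrightarrow> w \<in> carrier F \<and> v \<in> carrier F \<and> C ((\<phi> ^^ m) w) = C ((\<phi> ^^ n) v)"
  by (simp add: rel_def)

lemma rel_equiv: "equiv D rel"
proof (rule equivI)
  show "rel \<subseteq> D \<times> D" by (auto simp: rel_def)
  show "refl_on D rel" by (rule refl_onI) (auto simp: rel_def)
  show "sym rel" by (rule symI) (auto simp: rel_def)
  show "trans rel"
  proof (rule transI)
    fix x y z assume xy: "(x, y) \<in> rel" and yz: "(y, z) \<in> rel"
    obtain w n where x: "x = (w, n)" by (cases x)
    obtain v m where y: "y = (v, m)" by (cases y)
    obtain u k where z: "z = (u, k)" by (cases z)
    have c: "w \<in> carrier F" "v \<in> carrier F" "u \<in> carrier F"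
      and e1: "C ((\<phi> ^^ m) w) = C ((\<phi> ^^ n) v)" and e2: "C ((\<phi> ^^ k) v) = C ((\<phi> ^^ m) u)"
      using xy yz x y z by (auto simp: rel_def)
    have "C ((\<phi> ^^ k) ((\<phi> ^^ m) w)) = C ((\<phi> ^^ k) ((\<phi> ^^ n) v))"
      using Cphi[OF phi_pow_carrier phi_pow_carrier e1] c by blast
    also have "(\<phi> ^^ k) ((\<phi> ^^ n) v) = (\<phi> ^^ n) ((\<phi> ^^ k) v)" by (rule phcomm)
    also have "C \<dots> = C ((\<phi> ^^ n) ((\<phi> ^^ m) u))"
      using Cphi[OF phi_pow_carrier phi_pow_carrier e2] c by blast
    finally have "C ((\<phi> ^^ m) ((\<phi> ^^ k) w)) = C ((\<phi> ^^ m) ((\<phi> ^^ n) u))"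
      by (simp add: phcomm)
    then have "C ((\<phi> ^^ k) w) = C ((\<phi> ^^ n) u)"
      using Cinj c phi_pow_carrier by blast
    then show "(x, z) \<in> rel" using x z c by (simp add: rel_def)
  qed
qed

definition Lw :: "'a fword \<Rightarrow> 'a fword \<times> nat \<Rightarrow> 'a fword \<times> nat" where
  "Lw w = (\<lambda>(v, n). ((\<phi> ^^ n) w \<otimes>\<^bsub>F\<^esub> v, n))"

lemma Lw_simp: "Lw w (v, n) = ((\<phi> ^^ n) w \<otimes>\<^bsub>F\<^esub> v, n)" by (simp add: Lw_def)

lemma resp_Lw: "w \<in> carrier F \<Longrightarrow> resp rel (Lw w)"
  unfolding resp_def
proof (intro allI impI)
  fix x y assume w: "w \<in> carrier F" and xy: "(x, y) \<in> rel"
  obtain v n where x: "x = (v, n)" by (cases x)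
  obtain u m where y: "y = (u, m)" by (cases y)
  have c: "v \<in> carrier F" "u \<in> carrier F" and e: "C ((\<phi> ^^ m) v) = C ((\<phi> ^^ n) u)"
    using xy x y by (auto simp: rel_def)
  interpret Fg: group F by (rule F_group)
  have "C ((\<phi> ^^ m) ((\<phi> ^^ n) w \<otimes>\<^bsub>F\<^esub> v)) = C ((\<phi> ^^ (m + n)) w) <#>\<^bsub>F\<^esub> C ((\<phi> ^^ m) v)"
    using c w by (simp add: phm_mult phi_pow_carrier C_mult phadd)
  also have "\<dots> = C ((\<phi> ^^ (n + m)) w) <#>\<^bsub>F\<^esub> C ((\<phi> ^^ n) u)" using e by (simp add: add.commute)
  also have "\<dots> = C ((\<phi> ^^ n) ((\<phi> ^^ m) w \<otimes>\<^bsub>F\<^esub> u))"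
    using c w by (simp add: phm_mult phi_pow_carrier C_mult phadd)
  finally show "(Lw w x, Lw w y) \<in> rel"
    using x y c w by (simp add: rel_def Lw_def phi_pow_carrier)
qed

lemma Lw_mult: "w \<in> carrier F \<Longrightarrow> u \<in> carrier F \<Longrightarrow> x \<in> D \<Longrightarrow> Lw (w \<otimes>\<^bsub>F\<^esub> u) x = Lw w (Lw u x)"
  by (cases x) (simp add: Lw_def phm_mult group.is_monoid[OF F_group] monoid.m_assoc phi_pow_carrier)

lemma Lw_one: "x \<in> D \<Longrightarrow> Lw [] x = x"
  by (cases x) (simp add: Lw_def phm_one fg_mult reduce_reduced fg_carrier)

lemma rel_refl: "x \<in> D \<Longrightarrow> (x, x) \<in> rel"
  by (cases x) (simp add: rel_def)

end



context HNN begin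

abbreviation "QX \<equiv> D // rel"
abbreviation "BX \<equiv> BijGroup QX"

definition Lhat :: "'a fword \<Rightarrow> ('a fword \<times> nat) set \<Rightarrow> ('a fword \<times> nat) set" where
  "Lhat w = liftX D rel (Lw w)"

lemma Lhat_Bij: "w \<in> carrier F \<Longrightarrow> Lhat w \<in> Bij QX"
proof -
  assume w: "w \<in> carrier F"
  interpret Fg: group F by (rule F_group)
  have iw: "inv\<^bsub>F\<^esub> w \<in> carrier F" using w by simp
  have "Lw w (Lw (inv\<^bsub>F\<^esub> w) x) = x" if "x \<in> D" for x
    using Lw_mult[OF w iw that, symmetric] Lw_one[OF that] w by (simp add: fg_one)
  moreover have "Lw (inv\<^bsub>F\<^esub> w) (Lw w x) = x" if "x \<in> D" for x
    using Lw_mult[OF iw w that, symmetric] Lw_one[OF that] w by (simp add: fg_one)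
  ultimately show ?thesis unfolding Lhat_def
    by (intro lift_Bij[OF rel_equiv resp_Lw[OF w] resp_Lw[OF iw]]) (simp_all add: rel_refl)
qed

lemma B_mult: "f \<in> Bij QX \<Longrightarrow> g \<in> Bij QX \<Longrightarrow> f \<otimes>\<^bsub>BX\<^esub> g = compose QX f g"
  by (simp add: BijGroup_def)

lemma B_one: "\<one>\<^bsub>BX\<^esub> = (\<lambda>S \<in> QX. S)"
  by (simp add: BijGroup_def)

lemma Lhat_hom: "Lhat \<in> hom F BX"
proof (rule homI)
  fix x assume "x \<in> carrier F" then show "Lhat x \<in> carrier BX"
    using Lhat_Bij by (simp add: BijGroup_def)
next
  fix x y assume x: "x \<in> carrier F" and y: "y \<in> carrier F"
  interpret Fg: group F by (rule F_group)
  have "Lhat x \<otimes>\<^bsub>BX\<^esub> Lhat y = liftX D rel (Lw x \<circ> Lw y)"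
    using x y Lhat_Bij by (simp add: B_mult Lhat_def lift_comp[OF rel_equiv resp_Lw resp_Lw])
  also have "\<dots> = Lhat (x \<otimes>\<^bsub>F\<^esub> y)"
    unfolding Lhat_def
  proof (rule lift_cong[OF rel_equiv resp_comp[OF rel_equiv resp_Lw[OF x] resp_Lw[OF y]] resp_Lw])
    show "x \<otimes>\<^bsub>F\<^esub> y \<in> carrier F" using x y by simp
    fix p assume p: "p \<in> D"
    have "Lw y p \<in> D" using resp_D[OF rel_equiv resp_Lw[OF y] p] .
    then have "Lw x (Lw y p) \<in> D" by (rule resp_D[OF rel_equiv resp_Lw[OF x]])
    then have "(Lw x (Lw y p), Lw x (Lw y p)) \<in> rel" by (rule rel_refl)
    then show "((Lw x \<circ> Lw y) p, Lw (x \<otimes>\<^bsub>F\<^esub> y) p) \<in> rel"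
      by (simp only: comp_apply Lw_mult[OF x y p])
  qed
  finally show "Lhat (x \<otimes>\<^bsub>F\<^esub> y) = Lhat x \<otimes>\<^bsub>BX\<^esub> Lhat y" by simp
qed

definition Tm :: "'a fword \<times> nat \<Rightarrow> 'a fword \<times> nat" where "Tm = (\<lambda>(v, n). (v, Suc n))"
definition Ti :: "'a fword \<times> nat \<Rightarrow> 'a fword \<times> nat" where
  "Ti = (\<lambda>(v, n). case n of 0 \<Rightarrow> (\<phi> v, 0) | Suc k \<Rightarrow> (v, k))"

lemma phi_carrier: "v \<in> carrier F \<Longrightarrow> \<phi> v \<in> carrier F"
  using phi by (auto simp: hom_def)

lemma Cphi1: "x \<in> carrier F \<Longrightarrow> y \<in> carrier F \<Longrightarrow> C x = C y \<Longrightarrow> C (\<phi> x) = C (\<phi> y)"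
  using Cphi[of x y 1] by simp

lemma Cinj1: "x \<in> carrier F \<Longrightarrow> y \<in> carrier F \<Longrightarrow> C (\<phi> x) = C (\<phi> y) \<Longrightarrow> C x = C y"
  using Cinj[of x y 1] by simp

lemma resp_Tm: "resp rel Tm"
  unfolding resp_def Tm_def
proof (intro allI impI)
  fix x y assume xy: "(x, y) \<in> rel"
  obtain v n where x: "x = (v, n)" by (cases x)
  obtain u m where y: "y = (u, m)" by (cases y)
  have c: "v \<in> carrier F" "u \<in> carrier F" and e: "C ((\<phi> ^^ m) v) = C ((\<phi> ^^ n) u)"
    using xy x y by (auto simp: rel_def)
  have "C (\<phi> ((\<phi> ^^ m) v)) = C (\<phi> ((\<phi> ^^ n) u))"
    by (rule Cphi1[OF phi_pow_carrier[OF c(1)] phi_pow_carrier[OF c(2)] e])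
  then show "((case x of (v, n) \<Rightarrow> (v, Suc n)), (case y of (v, n) \<Rightarrow> (v, Suc n))) \<in> rel"
    using x y c by (simp add: rel_def)
qed

lemma resp_Ti: "resp rel Ti"
  unfolding resp_def
proof (intro allI impI)
  fix x y assume xy: "(x, y) \<in> rel"
  obtain v n where x: "x = (v, n)" by (cases x)
  obtain u m where y: "y = (u, m)" by (cases y)
  have c: "v \<in> carrier F" "u \<in> carrier F" and e: "C ((\<phi> ^^ m) v) = C ((\<phi> ^^ n) u)"
    using xy x y by (auto simp: rel_def)
  have sw: "\<And>k z. (\<phi> ^^ k) (\<phi> z) = (\<phi> ^^ Suc k) z" by (simp add: funpow_swap1)
  have sw2: "\<And>k z. (\<phi> ^^ Suc k) z = \<phi> ((\<phi> ^^ k) z)" by simp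
  have pv: "\<phi> v \<in> carrier F" "\<phi> u \<in> carrier F" using c phi_carrier by auto
  show "(Ti x, Ti y) \<in> rel"
  proof (cases n)
    case 0
    then show ?thesis
    proof (cases m)
      case 0
      then have "C v = C u" using e \<open>n = 0\<close> by simp
      then have "C (\<phi> v) = C (\<phi> u)" using Cphi1 c by blast
      then show ?thesis using \<open>n = 0\<close> \<open>m = 0\<close> x y pv by (simp add: rel_iff Ti_def)
    next
      case (Suc k)
      then have "C ((\<phi> ^^ k) (\<phi> v)) = C ((\<phi> ^^ 0) u)" using e \<open>n = 0\<close> by (simp only: sw)
      then show ?thesis using \<open>n = 0\<close> \<open>m = Suc k\<close> x y pv c by (simp add: rel_iff Ti_def)
    qed
  next
    case (Suc j)
    then show ?thesis
    proof (cases m)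
      case 0
      then have "C ((\<phi> ^^ 0) v) = C ((\<phi> ^^ j) (\<phi> u))" using e \<open>n = Suc j\<close> by (simp only: sw)
      then show ?thesis using \<open>n = Suc j\<close> \<open>m = 0\<close> x y pv c by (simp add: rel_iff Ti_def)
    next
      case (Suc k)
      then have "C (\<phi> ((\<phi> ^^ k) v)) = C (\<phi> ((\<phi> ^^ j) u))" using e \<open>n = Suc j\<close> by (simp only: sw2)
      then have "C ((\<phi> ^^ k) v) = C ((\<phi> ^^ j) u)" using Cinj1 c phi_pow_carrier by blast
      then show ?thesis using \<open>n = Suc j\<close> \<open>m = Suc k\<close> x y c by (simp add: rel_iff Ti_def)
    qed
  qed
qed

definition "That = liftX D rel Tm"

lemma That_Bij: "That \<in> Bij QX"
  unfolding That_def
proof (rule lift_Bij[OF rel_equiv resp_Tm resp_Ti])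
  fix x assume x: "x \<in> D"
  obtain v n where xv: "x = (v, n)" by (cases x)
  have v: "v \<in> carrier F" using x xv by simp
  show "(Tm (Ti x), x) \<in> rel"
  proof (cases n)
    case 0
    then show ?thesis using xv v phi_carrier[OF v] by (simp add: Tm_def Ti_def rel_iff)
  next
    case (Suc k)
    then show ?thesis using xv v rel_refl[of "(v, Suc k)"] by (simp add: Tm_def Ti_def)
  qed
  show "(Ti (Tm x), x) \<in> rel"
    using x xv rel_refl[of x] by (simp add: Tm_def Ti_def)
qed

lemma comm_rel: "a \<in> A \<Longrightarrow> Lhat (letter a) \<otimes>\<^bsub>BX\<^esub> That = That \<otimes>\<^bsub>BX\<^esub> Lhat (\<phi> (letter a))"
proof -
  assume a: "a \<in> A"
  have la: "letter a \<in> carrier F" using letter_carrier[OF a] .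
  have pa: "\<phi> (letter a) \<in> carrier F" using phi_carrier[OF la] .
  have "Lhat (letter a) \<otimes>\<^bsub>BX\<^esub> That = liftX D rel (Lw (letter a) \<circ> Tm)"
    using Lhat_Bij[OF la] That_Bij
    by (simp add: B_mult Lhat_def That_def lift_comp[OF rel_equiv resp_Lw[OF la] resp_Tm])
  also have "Lw (letter a) \<circ> Tm = Tm \<circ> Lw (\<phi> (letter a))"
  proof (rule ext)
    fix p :: "'a fword \<times> nat"
    obtain v n where p: "p = (v, n)" by (cases p)
    have "(\<phi> ^^ Suc n) (letter a) = (\<phi> ^^ n) (\<phi> (letter a))" by (simp only: funpow_Suc_right comp_apply)
    then show "(Lw (letter a) \<circ> Tm) p = (Tm \<circ> Lw (\<phi> (letter a))) p"
      by (simp add: p Lw_def Tm_def)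
  qed
  also have "liftX D rel (Tm \<circ> Lw (\<phi> (letter a))) = That \<otimes>\<^bsub>BX\<^esub> Lhat (\<phi> (letter a))"
    using Lhat_Bij[OF pa] That_Bij
    by (simp add: B_mult Lhat_def That_def lift_comp[OF rel_equiv resp_Tm resp_Lw[OF pa]])
  finally show ?thesis .
qed

definition gen :: "'a option \<Rightarrow> ('a fword \<times> nat) set \<Rightarrow> ('a fword \<times> nat) set" where
  "gen oo = (case oo of None \<Rightarrow> That | Some a \<Rightarrow> Lhat (letter a))"

definition "hh = ev BX gen"

lemma gen_B: "gen ` (insert None (Some ` A)) \<subseteq> carrier BX"
  using That_Bij Lhat_Bij[OF letter_carrier] by (auto simp: gen_def BijGroup_def)

lemma hh_hom: "hh \<in> hom G BX"
  unfolding hh_def by (rule ev_hom[OF group_BijGroup gen_B])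

lemma hh_t: "hh (letter None) = That"
  unfolding hh_def using ev_letter[OF group_BijGroup gen_B, of None] by (simp add: gen_def)

lemma hh_embed: "w \<in> carrier F \<Longrightarrow> hh (embed w) = Lhat w"
proof -
  assume w: "w \<in> carrier F"
  have h1: "hh \<circ> embed \<in> hom F BX" by (rule hom_compose[OF embed_hom hh_hom])
  have "(hh \<circ> embed) (letter a) = Lhat (letter a)" if "a \<in> A" for a
    unfolding hh_def using ev_letter[OF group_BijGroup gen_B, of "Some a"] that
    by (simp add: embed_letter gen_def)
  then show ?thesis using hom_unique[OF group_BijGroup h1 Lhat_hom _ w] by simp
qed

lemma relators_ker: "hnn_relators A R \<phi> \<subseteq> kernel G BX hh"
proof -
  interpret Bg: group BX by (rule group_BijGroup)
  interpret G: group G by (rule G_group)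
  interpret hh: group_hom G BX hh
    by (simp add: group_hom_def group_hom_axioms_def hh_hom G.is_group Bg.is_group)
  have 1: "embed r \<in> kernel G BX hh" if r: "r \<in> R" for r
  proof -
    have rc: "r \<in> carrier F" using r Rc by blast
    have "Lhat r = liftX D rel id"
      unfolding Lhat_def
    proof (rule lift_cong[OF rel_equiv resp_Lw[OF rc] resp_id[OF rel_equiv]])
      fix x assume x: "x \<in> D"
      obtain v n where xv: "x = (v, n)" by (cases x)
      have v: "v \<in> carrier F" using x xv by simp
      have "(\<phi> ^^ (n + n)) r \<in> K"
        using gens_NR[OF r, of "n + n"] rc phi_pow_carrier by (auto simp: Ninf_def preim_pow_def intro!: exI[of _ 0])
      then have "C ((\<phi> ^^ n) ((\<phi> ^^ n) r \<otimes>\<^bsub>F\<^esub> v)) = C ((\<phi> ^^ n) v)"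
        using rc v by (simp add: phm_mult phi_pow_carrier phadd C_K)
      then show "(Lw r x, id x) \<in> rel"
        using xv v rc by (simp add: rel_def Lw_def phi_pow_carrier monoid.m_closed[OF group.is_monoid[OF F_group]])
    qed
    then have "hh (embed r) = \<one>\<^bsub>BX\<^esub>"
      using hh_embed[OF rc] by (simp add: lift_id[OF rel_equiv] B_one)
    then show ?thesis using embed_carrier[OF rc] by (simp add: kernel_def)
  qed
  have 2: "inv\<^bsub>G\<^esub> (letter None) \<otimes>\<^bsub>G\<^esub> letter (Some a) \<otimes>\<^bsub>G\<^esub> letter None
        \<otimes>\<^bsub>G\<^esub> inv\<^bsub>G\<^esub> (embed (\<phi> (letter a))) \<in> kernel G BX hh" if a: "a \<in> A" for a
  proof -
    have la: "letter a \<in> carrier F" using letter_carrier[OF a] .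
    have pa: "\<phi> (letter a) \<in> carrier F" using phi_carrier[OF la] .
    let ?T = That and ?La = "Lhat (letter a)" and ?Lp = "Lhat (\<phi> (letter a))"
    have T: "?T \<in> carrier BX" and La: "?La \<in> carrier BX" and Lp: "?Lp \<in> carrier BX"
      using That_Bij Lhat_Bij la pa by (auto simp: BijGroup_def)
    have "hh (inv\<^bsub>G\<^esub> (letter None) \<otimes>\<^bsub>G\<^esub> letter (Some a) \<otimes>\<^bsub>G\<^esub> letter None
        \<otimes>\<^bsub>G\<^esub> inv\<^bsub>G\<^esub> (embed (\<phi> (letter a))))
      = inv\<^bsub>BX\<^esub> ?T \<otimes>\<^bsub>BX\<^esub> ?La \<otimes>\<^bsub>BX\<^esub> ?T \<otimes>\<^bsub>BX\<^esub> inv\<^bsub>BX\<^esub> ?Lp"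
      using tG aG[OF a] embed_carrier[OF pa]
      by (simp add: hh_t hh_embed[OF pa] hh_embed[OF la, symmetric] embed_letter)
    also have "inv\<^bsub>BX\<^esub> ?T \<otimes>\<^bsub>BX\<^esub> ?La \<otimes>\<^bsub>BX\<^esub> ?T = ?Lp"
    proof -
      have "inv\<^bsub>BX\<^esub> ?T \<otimes>\<^bsub>BX\<^esub> ?La \<otimes>\<^bsub>BX\<^esub> ?T = inv\<^bsub>BX\<^esub> ?T \<otimes>\<^bsub>BX\<^esub> (?T \<otimes>\<^bsub>BX\<^esub> ?Lp)"
        using T La Lp comm_rel[OF a] by (simp add: Bg.m_assoc)
      also have "\<dots> = ?Lp" using T Lp by (simp add: Bg.m_assoc[symmetric])
      finally show ?thesis .
    qed
    finally have "hh (inv\<^bsub>G\<^esub> (letter None) \<otimes>\<^bsub>G\<^esub> letter (Some a) \<otimes>\<^bsub>G\<^esub> letter None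
        \<otimes>\<^bsub>G\<^esub> inv\<^bsub>G\<^esub> (embed (\<phi> (letter a)))) = \<one>\<^bsub>BX\<^esub>" using Lp by simp
    then show ?thesis using tG aG[OF a] embed_carrier[OF pa] by (simp add: kernel_def)
  qed
  show ?thesis unfolding hnn_relators_def using 1 2 by blast
qed

lemma Hs_ker: "Hs \<subseteq> kernel G BX hh"
  unfolding hnn_rel_subgroup_def
proof (rule normal_closure_min[OF _ relators_ker])
  show "kernel G BX hh \<lhd> G"
    by (rule group_hom.normal_kernel)
       (simp add: group_hom_def group_hom_axioms_def hh_hom group.is_group[OF G_group] group.is_group[OF group_BijGroup])
qed

lemma ker_K: "kernel F (hnn_group A R \<phi>) (hnn_incl A R \<phi>) \<subseteq> K"
proof
  fix w assume "w \<in> kernel F (hnn_group A R \<phi>) (hnn_incl A R \<phi>)"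
  then have w: "w \<in> carrier F" and e: "Hs #>\<^bsub>G\<^esub> embed w = Hs"
    by (auto simp: kernel_def hnn_group_def hnn_incl_def one_FactGroup)
  interpret G: group G by (rule G_group)
  have "embed w \<in> Hs" using G.rcos_self[OF embed_carrier[OF w] normal_imp_subgroup[OF Hs_normal]] e by simp
  then have "hh (embed w) = \<one>\<^bsub>BX\<^esub>" using Hs_ker by (auto simp: kernel_def)
  then have L: "Lhat w = (\<lambda>S \<in> QX. S)" using hh_embed[OF w] by (simp add: B_one)
  have z: "([], 0::nat) \<in> D" by (simp add: fg_carrier)
  have "Lhat w (rel `` {([], 0)}) = rel `` {Lw w ([], 0)}"
    unfolding Lhat_def by (rule lift_cls[OF rel_equiv resp_Lw[OF w] z])
  moreover have "Lw w ([], 0) = (w, 0)"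
    using w by (simp add: Lw_def fg_mult reduce_reduced fg_carrier)
  moreover have "rel `` {([], 0)} \<in> QX" using z by (rule quotientI)
  ultimately have "rel `` {(w, 0)} = rel `` {([], 0)}" using L by simp
  then have "((w, 0), ([], 0)) \<in> rel" using eq_equiv_class_iff[OF rel_equiv] w z by simp
  then have "C w = C []" by (simp add: rel_def)
  then show "w \<in> K" using C_one w by blast
qed

end


theorem theorem4p4:
  fixes A :: "'a set" and R :: "'a fword set" and \<phi> :: "'a fword \<Rightarrow> 'a fword"
  assumes "finite A"
    and "\<phi> \<in> hom (free_group A) (free_group A)"
    and "finite R" and "R \<subseteq> carrier (free_group A)"
  shows "kernel (free_group A) (hnn_group A R \<phi>) (hnn_incl A R \<phi>)
           = normal_closure (free_group A) (Ninf A R \<phi>)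
         \<and> (\<forall>i. preim_pow A \<phi> i (NR A R \<phi>) \<subseteq> preim_pow A \<phi> (Suc i) (NR A R \<phi>))
         \<and> \<phi> ` Ninf A R \<phi> \<subseteq> Ninf A R \<phi>
         \<and> Ninf A R \<phi> = preim_pow A \<phi> 1 (Ninf A R \<phi>)"
proof -
  interpret HNN A R \<phi> using assms by (simp add: HNN_def)
  have "normal_closure (free_group A) (Ninf A R \<phi>) = Ninf A R \<phi>"
    by (rule normal_closure_id[OF F_group K_normal])
  moreover have "kernel (free_group A) (hnn_group A R \<phi>) (hnn_incl A R \<phi>) = Ninf A R \<phi>"
    using ker_K K_ker by blast
  ultimately show ?thesis using P_Suc phi_K K_eq by auto
qed

end
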